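(* Let $\mathcal{F}\subseteq\mathcal{B}_n$, let $q$ be a positive integer, let $\varepsilon>0$, let $\mathcal{T}$ be a $q$-strong $1$-marked chain family from $\mathcal{F}$, and let $\mathcal{M}=\mathcal{T}[q]$. For $i\in[q]$ and $\chi\in\mathcal{C}$ let $\mathcal{L}^i(\mathcal{M},\chi)$ be the set of $F\in\mathcal{F}$ for which there is $(\chi,Q)\in\mathcal{M}$ such that $F$ is the $i$-th member of $Q$, and let $\mathcal{L}^i(\mathcal{M})=\bigcup_{\chi\in\mathcal{C}}\mathcal{L}^i(\mathcal{M},\chi)$. If $|\mathcal{T}|\geq\varepsilon\, n!$, then for each $i\in[q]$, $$|\mathcal{L}^i(\mathcal{M})|\geq\frac{\varepsilon}{q}\min_{F\in\mathcal{F}}\binom{n}{|F|}.$$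
   Context: $\mathcal{B}_n$ is the family of all subsets of $[n]$. $\mathcal{C}$ is the set of all full chains $\emptyset=C_0\subsetneq C_1\subsetneq\cdots\subsetneq C_n=[n]$ (identified with their sets of members). A $1$-marked chain from $\mathcal{F}$ is a pair $(\chi,F)$ with $\chi\in\mathcal{C}$, $F\in\mathcal{F}\cap\chi$; for a family $\mathcal{T}$ of such pairs, $\mathcal{T}(\chi)=\{F:(\chi,F)\in\mathcal{T}\}$, and $\mathcal{T}$ is $q$-strong if $|\mathcal{T}(\chi)|\ge q$ whenever $\mathcal{T}(\chi)\neq\emptyset$. A $q$-chain is a tuple $(F_1,\dots,F_q)$ with $F_1\supsetneq F_2\supsetneq\cdots\supsetneq F_q$; its $i$-th member is $F_i$. A $q$-marked chain is a pair $(\chi,Q)$ with $\chi\in\mathcal{C}$ and $Q$ a $q$-chain all of whose members lie on $\chi$. The $q$-th power of $\mathcal{T}$ is $\mathcal{T}[q]=\{(\chi,Q): Q \text{ a } q\text{-element subset of }\mathcal{T}(\chi)\}$, where each such $Q$ is viewed as a $q$-chain ordered by decreasing size. *)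

theory Defs
  imports Complex_Main
begin

text \<open>Ground set [n] is rendered as {0..<n}.  A full chain is identified with its set of members.\<close>

definition full_chain :: "nat \<Rightarrow> nat set set \<Rightarrow> bool" where
  "full_chain n \<chi> \<longleftrightarrow> (\<exists>C :: nat \<Rightarrow> nat set. C 0 = {} \<and> C n = {0..<n}
      \<and> (\<forall>i<n. C i \<subset> C (Suc i)) \<and> \<chi> = C ` {0..n})"

definition full_chains :: "nat \<Rightarrow> nat set set set" where
  "full_chains n = {\<chi>. full_chain n \<chi>}"

definition marked_family :: "nat \<Rightarrow> nat set set \<Rightarrow> (nat set set \<times> nat set) set \<Rightarrow> bool" where
  "marked_family n \<F> T \<longleftrightarrow> (\<forall>(\<chi>, F) \<in> T. \<chi> \<in> full_chains n \<and> F \<in> \<F> \<and> F \<in> \<chi>)"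

definition Tsec :: "(nat set set \<times> nat set) set \<Rightarrow> nat set set \<Rightarrow> nat set set" where
  "Tsec T \<chi> = {F. (\<chi>, F) \<in> T}"

definition q_strong :: "nat \<Rightarrow> (nat set set \<times> nat set) set \<Rightarrow> bool" where
  "q_strong q T \<longleftrightarrow> (\<forall>\<chi>. Tsec T \<chi> \<noteq> {} \<longrightarrow> card (Tsec T \<chi>) \<ge> q)"

text \<open>A q-chain is a list F_1 \<supset> F_2 \<supset> ... \<supset> F_q (strictly decreasing); its i-th member is the list entry at index i-1.\<close>
definition q_chain :: "nat \<Rightarrow> nat set list \<Rightarrow> bool" where
  "q_chain q Q \<longleftrightarrow> length Q = q \<and> sorted_wrt (\<lambda>A B. B \<subset> A) Q"

text \<open>The q-th power T[q]: q-element subsets of T(\<chi>), viewed as q-chains ordered by decreasing size.\<close>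
definition power :: "(nat set set \<times> nat set) set \<Rightarrow> nat \<Rightarrow> (nat set set \<times> nat set list) set" where
  "power T q = {(\<chi>, Q). q_chain q Q \<and> set Q \<subseteq> Tsec T \<chi>}"

definition Lchi :: "nat set set \<Rightarrow> nat \<Rightarrow> (nat set set \<times> nat set list) set \<Rightarrow> nat set set \<Rightarrow> nat set set" where
  "Lchi \<F> i M \<chi> = {F \<in> \<F>. \<exists>Q. (\<chi>, Q) \<in> M \<and> Q ! (i - 1) = F}"

definition Lall :: "nat \<Rightarrow> nat set set \<Rightarrow> nat \<Rightarrow> (nat set set \<times> nat set list) set \<Rightarrow> nat set set" where
  "Lall n \<F> i M = (\<Union>\<chi> \<in> full_chains n. Lchi \<F> i M \<chi>)"

end

theory Submission
  imports Defs "HOL-Combinatorics.Multiset_Permutations"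
begin

lemma chain_repr:
  fixes C :: "nat \<Rightarrow> nat set"
  assumes c0: "C 0 = {}" and cn: "C n = {0..<n}" and st: "\<forall>i<n. C i \<subset> C (Suc i)"
  shows "\<exists>xs. distinct xs \<and> set xs = {0..<n} \<and> length xs = n \<and> (\<forall>j\<le>n. C j = set (take j xs))"
proof -
  have mono: "C j \<subseteq> C k" if "j \<le> k" "k \<le> n" for j k
    using that
  proof (induction k)
    case 0 then show ?case by simp
  next
    case (Suc k)
    show ?case
    proof (cases "j = Suc k")
      case False
      then have "j \<le> k" "k \<le> n" using Suc.prems by auto
      then have "C j \<subseteq> C k" using Suc.IH by blast
      also have "C k \<subseteq> C (Suc k)"
      proof -
        have "k < n" using Suc.prems by simp
        then have "C k \<subset> C (Suc k)" using st by blast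
        then show ?thesis by blast
      qed
      finally show ?thesis .
    qed simp
  qed
  have fin: "finite (C j)" if "j \<le> n" for j
    using mono[OF that order_refl] cn by (metis finite_atLeastLessThan finite_subset)
  have cardinc: "card (C j) + (k - j) \<le> card (C k)" if "j \<le> k" "k \<le> n" for j k
    using that
  proof (induction k)
    case 0 then show ?case by simp
  next
    case (Suc k)
    show ?case
    proof (cases "j = Suc k")
      case False
      then have "j \<le> k" "k \<le> n" using Suc.prems by auto
      then have "card (C j) + (k - j) \<le> card (C k)" using Suc.IH by blast
      moreover have "card (C k) < card (C (Suc k))"
        using st Suc.prems fin[of "Suc k"] by (intro psubset_card_mono) auto
      ultimately show ?thesis using False Suc.prems by linarith
    qed simp
  qed
  have card: "card (C j) = j" if "j \<le> n" for j
    using cardinc[OF _ that, of 0] cardinc[OF that order_refl] c0 cn by simp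
  have "\<forall>j. \<exists>x. j < n \<longrightarrow> C (Suc j) = insert x (C j)"
  proof (intro allI impI)
    fix j
    show "\<exists>x. j < n \<longrightarrow> C (Suc j) = insert x (C j)"
    proof (cases "j < n")
      case True
      have "card (C (Suc j) - C j) = 1"
        using True st card[of j] card[of "Suc j"] fin[of j]
        by (subst card_Diff_subset) auto
      then obtain x where "C (Suc j) - C j = {x}" by (auto simp: card_1_singleton_iff)
      then have "C (Suc j) = insert x (C j)" using st True by auto
      then show ?thesis by blast
    qed simp
  qed
  then obtain f where f0: "\<forall>j. j < n \<longrightarrow> C (Suc j) = insert (f j) (C j)" by (rule choice[THEN exE]) blast
  have f: "C (Suc j) = insert (f j) (C j)" if "j < n" for j using f0 that by blast
  define xs where "xs = map f [0..<n]"
  have tk: "set (take j xs) = C j" if "j \<le> n" for j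
    using that
  proof (induction j)
    case 0 then show ?case using c0 by (simp add: xs_def)
  next
    case (Suc j)
    have "take (Suc j) xs = map f [0..<Suc j]" using Suc.prems by (simp add: xs_def take_map)
    then have "set (take (Suc j) xs) = insert (f j) (set (map f [0..<j]))" by simp
    also have "map f [0..<j] = take j xs" using Suc.prems by (simp add: xs_def take_map)
    finally show ?case using Suc f by simp
  qed
  have len: "length xs = n" by (simp add: xs_def)
  have sx: "set xs = {0..<n}" using tk[of n] cn len by simp
  have "distinct xs" using sx len by (simp add: card_distinct)
  then show ?thesis using sx len tk by blast
qed
lemma full_chain_repr:
  assumes "full_chain n \<chi>"
  shows "\<exists>xs. xs \<in> permutations_of_set {0..<n} \<and> length xs = n \<and> \<chi> = (\<lambda>j. set (take j xs)) ` {0..n}"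
proof -
  obtain C where C: "C 0 = {}" "C n = {0..<n}" "\<forall>i<n. C i \<subset> C (Suc i)" "\<chi> = C ` {0..n}"
    using assms unfolding full_chain_def by blast
  obtain xs where xs: "distinct xs" "set xs = {0..<n}" "length xs = n" "\<forall>j\<le>n. C j = set (take j xs)"
    using chain_repr[OF C(1-3)] by blast
  have "\<chi> = (\<lambda>j. set (take j xs)) ` {0..n}" using C(4) xs(4) by (auto intro!: image_cong)
  then show ?thesis using xs by (auto simp: permutations_of_set_def)
qed


lemma card_take_set:
  assumes "distinct xs" "j \<le> length xs"
  shows "card (set (take j xs)) = j"
  using assms by (simp add: distinct_card)

lemma chain_count:
  assumes F: "F \<subseteq> {0..<n}"
  shows "card {\<chi> \<in> full_chains n. F \<in> \<chi>} \<le> fact (card F) * fact (n - card F)"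
proof -
  let ?k = "card F"
  let ?P = "{xs \<in> permutations_of_set {0..<n}. set (take ?k xs) = F}"
  let ?cof = "\<lambda>xs. (\<lambda>j. set (take j xs)) ` {0..n}"
  have sub1: "{\<chi> \<in> full_chains n. F \<in> \<chi>} \<subseteq> ?cof ` ?P"
  proof
    fix \<chi> assume "\<chi> \<in> {\<chi> \<in> full_chains n. F \<in> \<chi>}"
    then have h: "full_chain n \<chi>" "F \<in> \<chi>" by (auto simp: full_chains_def)
    obtain xs where xs: "xs \<in> permutations_of_set {0..<n}" "length xs = n"
       "\<chi> = ?cof xs" using full_chain_repr[OF h(1)] by blast
    obtain j where j: "j \<le> n" "F = set (take j xs)" using h(2) xs(3) by auto
    have "card F = j" using j xs card_take_set[of xs j] by (auto simp: permutations_of_set_def)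
    then have "xs \<in> ?P" using xs j by auto
    then show "\<chi> \<in> ?cof ` ?P" using xs by blast
  qed
  have sub2: "?P \<subseteq> (\<lambda>(a, b). a @ b) ` (permutations_of_set F \<times> permutations_of_set ({0..<n} - F))"
  proof
    fix xs assume xs: "xs \<in> ?P"
    then have d: "distinct xs" "set xs = {0..<n}" "set (take ?k xs) = F"
      by (auto simp: permutations_of_set_def)
    have u: "set xs = set (take ?k xs) \<union> set (drop ?k xs)" by (metis append_take_drop_id set_append)
    have dj: "set (take ?k xs) \<inter> set (drop ?k xs) = {}" using d(1) by (metis append_take_drop_id distinct_append)
    have "set (drop ?k xs) = {0..<n} - F" using u dj d(2,3) by blast
    then have "(take ?k xs, drop ?k xs) \<in> permutations_of_set F \<times> permutations_of_set ({0..<n} - F)"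
      using d by (auto simp: permutations_of_set_def)
    then show "xs \<in> (\<lambda>(a, b). a @ b) ` (permutations_of_set F \<times> permutations_of_set ({0..<n} - F))"
      by (intro image_eqI[where x="(take ?k xs, drop ?k xs)"]) simp_all
  qed
  have finF: "finite F" using finite_subset[OF F] by simp
  have cardc: "card ({0..<n} - F) = n - ?k" using F finF by (simp add: card_Diff_subset)
  have "card {\<chi> \<in> full_chains n. F \<in> \<chi>} \<le> card (?cof ` ?P)"
    by (rule card_mono[OF _ sub1]) (auto intro: finite_subset[of _ "permutations_of_set {0..<n}"])
  also have "\<dots> \<le> card ?P" by (rule card_image_le) (auto intro: finite_subset[of _ "permutations_of_set {0..<n}"])
  also have "\<dots> \<le> card ((\<lambda>(a, b). a @ b) ` (permutations_of_set F \<times> permutations_of_set ({0..<n} - F)))"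
    by (rule card_mono[OF _ sub2]) auto
  also have "\<dots> \<le> card (permutations_of_set F \<times> permutations_of_set ({0..<n} - F))"
    by (rule card_image_le) auto
  also have "\<dots> = fact ?k * fact (n - ?k)" using finF cardc by (simp add: card_cartesian_product)
  finally show ?thesis .
qed

lemma perchain:
  fixes xs :: "nat list"
  assumes xs: "distinct xs" "length xs = n"
    and Ssub: "Tsec T \<chi> \<subseteq> (\<lambda>j. set (take j xs)) ` {0..n}"
    and SF: "Tsec T \<chi> \<subseteq> \<F>"
    and qS: "q \<le> card (Tsec T \<chi>)" and q: "0 < q" and i: "1 \<le> i" "i \<le> q"
  shows "card (Tsec T \<chi>) \<le> q * card (Lchi \<F> i (power T q) \<chi>)"
proof -
  define S where "S = Tsec T \<chi>"
  define g where "g = (\<lambda>j. set (take j xs))"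
  define J where "J = {j \<in> {0..n}. g j \<in> S}"
  have cg: "card (g j) = j" if "j \<le> n" for j
    unfolding g_def by (rule card_take_set) (use xs that in auto)
  have inj: "inj_on g {0..n}"
  proof (rule inj_onI)
    fix a b assume ab: "a \<in> {0..n}" "b \<in> {0..n}" "g a = g b"
    have "card (g a) = a" by (rule cg) (use ab in simp)
    moreover have "card (g b) = b" by (rule cg) (use ab in simp)
    ultimately show "a = b" using ab(3) by metis
  qed
  have Jsub: "J \<subseteq> {0..n}" unfolding J_def by blast
  have finJ: "finite J" using finite_subset[OF Jsub] by simp
  have SJ: "S = g ` J"
  proof
    show "S \<subseteq> g ` J"
    proof
      fix F assume F: "F \<in> S"
      then have "F \<in> g ` {0..n}" using Ssub unfolding S_def g_def by blast
      then obtain j where j: "j \<in> {0..n}" "F = g j" by blast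
      then have "j \<in> J" using F unfolding J_def by blast
      then show "F \<in> g ` J" using j(2) by blast
    qed
    show "g ` J \<subseteq> S" unfolding J_def by blast
  qed
  have injJ: "inj_on g J" using inj Jsub by (rule inj_on_subset)
  have cJ: "card J = card S" unfolding SJ using injJ by (simp add: card_image)
  define ls where "ls = map g (rev (sorted_list_of_set J))"
  let ?m = "card S"
  have len: "length ls = ?m" using cJ by (simp add: ls_def)
  have setls: "set ls = S" using SJ finJ by (simp add: ls_def)
  have dls: "distinct ls" unfolding ls_def distinct_map
    using injJ finJ by simp
  have strict: "g b \<subset> g a" if "a \<le> n" "b < a" for a b
  proof -
    have 1: "g b \<subseteq> g a" unfolding g_def by (rule set_take_subset_set_take) (use that in simp)
    have 2: "card (g b) = b" by (rule cg) (use that in simp)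
    have 3: "card (g a) = a" by (rule cg) (use that in simp)
    have "g b \<noteq> g a" using 2 3 that by force
    then show ?thesis using 1 by (rule psubsetI[rotated])
  qed
  have ss: "sorted_wrt (<) (sorted_list_of_set J)"
    by (metis strict_sorted_iff sorted_sorted_list_of_set distinct_sorted_list_of_set)
  have sorted: "sorted_wrt (\<lambda>A B. B \<subset> A) ls"
    unfolding ls_def sorted_wrt_map sorted_wrt_rev
  proof (rule sorted_wrt_mono_rel[OF _ ss])
    fix x y assume "x \<in> set (sorted_list_of_set J)" "y \<in> set (sorted_list_of_set J)" "x < y"
    then have "y \<in> J" using finJ by simp
    then have "y \<le> n" by (simp add: J_def)
    then show "g x \<subset> g y" using strict[of y x] \<open>x < y\<close> by blast
  qed
  have sub: "(\<lambda>t. ls ! t) ` {i-1..?m-q+i-1} \<subseteq> Lchi \<F> i (power T q) \<chi>"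
  proof
    fix F assume "F \<in> (\<lambda>t. ls ! t) ` {i-1..?m-q+i-1}"
    then obtain t where t: "i - 1 \<le> t" "t \<le> ?m-q+i-1" "F = ls ! t" by auto
    define Q where "Q = take q (drop (t - (i - 1)) ls)"
    have tm: "t < ?m" using t(1,2) qS i q unfolding S_def by arith
    have lQ: "length Q = q" using t(1,2) len qS i unfolding S_def Q_def by simp
    have sQ: "sorted_wrt (\<lambda>A B. B \<subset> A) Q" using sorted by (simp add: Q_def)
    have setQ: "set Q \<subseteq> Tsec T \<chi>"
      using setls S_def by (metis Q_def set_drop_subset set_take_subset subset_trans)
    have QF: "Q ! (i - 1) = F" using t i len tm by (simp add: Q_def)
    have "(\<chi>, Q) \<in> power T q" using lQ sQ setQ by (simp add: power_def q_chain_def)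
    moreover have "F \<in> \<F>" using tm len setls SF S_def t(3) by (metis nth_mem subsetD)
    ultimately show "F \<in> Lchi \<F> i (power T q) \<chi>" using QF by (auto simp: Lchi_def)
  qed
  have "card ((\<lambda>t. ls ! t) ` {i-1..?m-q+i-1}) = ?m - q + 1"
  proof (subst card_image)
    show "inj_on ((!) ls) {i - 1..?m - q + i - 1}"
      by (rule inj_on_nth[OF dls]) (use len qS i S_def in auto)
  qed (use qS i S_def in auto)
  moreover have "finite (Lchi \<F> i (power T q) \<chi>)"
  proof (rule finite_subset[of _ S])
    show "Lchi \<F> i (power T q) \<chi> \<subseteq> S"
    proof
      fix F assume "F \<in> Lchi \<F> i (power T q) \<chi>"
      then obtain Q where Q: "(\<chi>, Q) \<in> power T q" "Q ! (i - 1) = F" by (auto simp: Lchi_def)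
      then have "length Q = q" "set Q \<subseteq> Tsec T \<chi>" by (auto simp: power_def q_chain_def)
      then show "F \<in> S" using Q i S_def by (metis diff_less less_le_trans nth_mem subsetD zero_less_one)
    qed
  qed (simp add: SJ finJ)
  ultimately have "?m - q + 1 \<le> card (Lchi \<F> i (power T q) \<chi>)"
    using card_mono[OF _ sub] by metis
  moreover have "?m \<le> q * (?m - q + 1)"
  proof -
    have "q * (?m - q + 1) = q * (?m - q) + q" by simp
    moreover have "?m - q \<le> q * (?m - q)" using q by simp
    ultimately show ?thesis using qS S_def by linarith
  qed
  ultimately show ?thesis unfolding S_def
    by (meson le_trans mult_le_mono2)
qed

lemma final_arith:
  fixes e mn A L f q :: real
  assumes "e * f \<le> q * A" "mn * A \<le> L * f" "f > 0" "q > 0" "mn \<ge> 0"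
  shows "e / q * mn \<le> L"
proof -
  have "e * f * mn \<le> q * A * mn" using assms(1,5) by (rule mult_right_mono)
  also have "\<dots> = q * (mn * A)" by simp
  also have "\<dots> \<le> q * (L * f)" using assms(2,4) by simp
  finally have "(e * mn) * f \<le> (q * L) * f" by (simp add: algebra_simps)
  then have "e * mn \<le> q * L" using assms(3) by simp
  then show ?thesis using assms(4) by (simp add: field_simps)
qed

theorem lemma4p3:
  fixes n q i :: nat and \<F> :: "nat set set" and \<epsilon> :: real
    and T :: "(nat set set \<times> nat set) set"
  assumes "\<F> \<subseteq> Pow {0..<n}"
    and "q > 0"
    and "\<epsilon> > 0"
    and "marked_family n \<F> T"
    and "q_strong q T"
    and "real (card T) \<ge> \<epsilon> * real (fact n)"
    and "i \<in> {1..q}"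
  shows "real (card (Lall n \<F> i (power T q)))
           \<ge> \<epsilon> / real q * real (Min ((\<lambda>F. n choose card F) ` \<F>))"
proof -
  let ?Ch = "full_chains n"
  define L where "L = Lall n \<F> i (power T q)"
  define mn where "mn = Min ((\<lambda>F. n choose card F) ` \<F>)"
  define N where "N = (\<lambda>F. card {\<chi> \<in> ?Ch. F \<in> \<chi>})"
  have finF: "finite \<F>" using finite_subset[OF assms(1)] by simp
  have i1: "1 \<le> i" "i \<le> q" using assms(7) by auto
  have repr: "\<exists>xs. xs \<in> permutations_of_set {0..<n} \<and> length xs = n \<and> \<chi> = (\<lambda>j. set (take j xs)) ` {0..n}"
    if "\<chi> \<in> ?Ch" for \<chi>
    using that full_chain_repr by (simp add: full_chains_def)
  have ChPow: "?Ch \<subseteq> Pow (Pow {0..<n})"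
  proof
    fix \<chi> assume "\<chi> \<in> ?Ch"
    then obtain xs where xs: "xs \<in> permutations_of_set {0..<n}" "\<chi> = (\<lambda>j. set (take j xs)) ` {0..n}"
      using repr by blast
    have "set (take j xs) \<subseteq> {0..<n}" for j
      using xs(1) set_take_subset[of j xs] by (simp add: permutations_of_set_def)
    then show "\<chi> \<in> Pow (Pow {0..<n})" using xs(2) by auto
  qed
  have finCh: "finite ?Ch" using finite_subset[OF ChPow] by simp
  have secF: "Tsec T \<chi> \<subseteq> \<F>" and secC: "Tsec T \<chi> \<subseteq> \<chi>" for \<chi>
    using assms(4) unfolding marked_family_def Tsec_def by auto
  have secCh: "\<chi> \<in> ?Ch" if "Tsec T \<chi> \<noteq> {}" for \<chi>
    using that assms(4) unfolding marked_family_def Tsec_def by auto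
  have finsec: "finite (Tsec T \<chi>)" for \<chi> using finite_subset[OF secF finF] .
  have Teq: "T = Sigma ?Ch (Tsec T)"
    using assms(4) unfolding marked_family_def Tsec_def by auto
  have cT: "card T = (\<Sum>\<chi>\<in>?Ch. card (Tsec T \<chi>))"
    using finCh finsec by (subst Teq) simp
  have LF: "L \<subseteq> \<F>" by (auto simp: L_def Lall_def Lchi_def)
  have finL: "finite L" using finite_subset[OF LF finF] .
  have bound: "card (Tsec T \<chi>) \<le> q * card {F \<in> L. F \<in> \<chi>}" if ch: "\<chi> \<in> ?Ch" for \<chi>
  proof (cases "Tsec T \<chi> = {}")
    case True then show ?thesis by simp
  next
    case False
    have qS: "q \<le> card (Tsec T \<chi>)" using assms(5) False by (simp add: q_strong_def)
    obtain xs where xs: "xs \<in> permutations_of_set {0..<n}" "length xs = n"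
      "\<chi> = (\<lambda>j. set (take j xs)) ` {0..n}" using repr[OF ch] by blast
    have dxs: "distinct xs" using xs(1) by (simp add: permutations_of_set_def)
    have "card (Tsec T \<chi>) \<le> q * card (Lchi \<F> i (power T q) \<chi>)"
      by (rule perchain[OF dxs xs(2) _ secF qS assms(2) i1]) (use secC xs(3) in simp)
    also have "\<dots> \<le> q * card {F \<in> L. F \<in> \<chi>}"
    proof (rule mult_le_mono2, rule card_mono)
      show "finite {F \<in> L. F \<in> \<chi>}" using finL by simp
      show "Lchi \<F> i (power T q) \<chi> \<subseteq> {F \<in> L. F \<in> \<chi>}"
      proof
        fix F assume F: "F \<in> Lchi \<F> i (power T q) \<chi>"
        then have "F \<in> L" using ch unfolding L_def Lall_def by blast
        moreover
        obtain Q where Q: "(\<chi>, Q) \<in> power T q" "Q ! (i - 1) = F" using F by (auto simp: Lchi_def)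
        then have lq: "length Q = q" "set Q \<subseteq> Tsec T \<chi>" by (auto simp: power_def q_chain_def)
        have "i - 1 < length Q" using lq(1) i1 by simp
        then have "F \<in> set Q" using Q(2) nth_mem by metis
        then have "F \<in> \<chi>" using lq(2) secC by blast
        ultimately show "F \<in> {F \<in> L. F \<in> \<chi>}" by simp
      qed
    qed
    finally show ?thesis .
  qed
  have cnt: "card {F \<in> L. F \<in> \<chi>} = (\<Sum>F\<in>L. if F \<in> \<chi> then 1 else 0)" for \<chi>
    using finL by (simp add: sum.inter_filter[symmetric])
  have swap: "(\<Sum>\<chi>\<in>?Ch. card {F \<in> L. F \<in> \<chi>}) = (\<Sum>F\<in>L. N F)"
  proof -
    have "(\<Sum>\<chi>\<in>?Ch. card {F \<in> L. F \<in> \<chi>}) = (\<Sum>\<chi>\<in>?Ch. \<Sum>F\<in>L. if F \<in> \<chi> then 1 else 0)"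
      using cnt by simp
    also have "\<dots> = (\<Sum>F\<in>L. \<Sum>\<chi>\<in>?Ch. if F \<in> \<chi> then 1 else 0)" by (rule sum.swap)
    also have "\<dots> = (\<Sum>F\<in>L. N F)"
      using finCh by (simp add: N_def sum.inter_filter[symmetric])
    finally show ?thesis .
  qed
  have h1: "card T \<le> q * (\<Sum>F\<in>L. N F)"
  proof -
    have "card T \<le> (\<Sum>\<chi>\<in>?Ch. q * card {F \<in> L. F \<in> \<chi>})"
      unfolding cT by (rule sum_mono) (rule bound)
    also have "\<dots> = q * (\<Sum>F\<in>L. N F)" by (simp add: sum_distrib_left[symmetric] swap)
    finally show ?thesis .
  qed
  have NF: "N F * mn \<le> fact n" if F: "F \<in> L" for F
  proof -
    have FF: "F \<in> \<F>" using F LF by blast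
    have Fsub: "F \<subseteq> {0..<n}" using FF assms(1) by blast
    have kn: "card F \<le> n" using card_mono[OF _ Fsub] by simp
    have "mn \<le> n choose card F" unfolding mn_def using finF FF by (intro Min_le) auto
    then have "N F * mn \<le> fact (card F) * fact (n - card F) * (n choose card F)"
      using chain_count[OF Fsub] unfolding N_def by (intro mult_le_mono) auto
    also have "\<dots> = fact n" using binomial_fact_lemma[OF kn] .
    finally show ?thesis .
  qed
  have h2: "(\<Sum>F\<in>L. N F) * mn \<le> card L * fact n"
  proof -
    have "(\<Sum>F\<in>L. N F) * mn = (\<Sum>F\<in>L. N F * mn)" by (simp add: sum_distrib_right)
    also have "\<dots> \<le> (\<Sum>F\<in>L. fact n)" by (rule sum_mono) (rule NF)
    also have "\<dots> = card L * fact n" by simp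
    finally show ?thesis .
  qed
  have r1: "\<epsilon> * real (fact n) \<le> real q * real (\<Sum>F\<in>L. N F)"
    using assms(6) h1 by (metis of_nat_le_iff of_nat_mult order_trans)
  have r2: "real mn * real (\<Sum>F\<in>L. N F) \<le> real (card L) * real (fact n)"
    using h2 by (metis mult.commute of_nat_le_iff of_nat_mult)
  have "\<epsilon> / real q * real mn \<le> real (card L)"
    by (rule final_arith[OF r1 r2]) (use assms(2) in auto)
  then show ?thesis unfolding L_def mn_def .
qed

end
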